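(* Let $m\ge3$, let $O^m$ be the set of odd-parity $m$-bit strings and let $u=u_1\cdots u_m\in O^m$. Let $n\ge1$ and let $m$ parties (the first being Alice) hold $X_j=(x^j_1,\dots,x^j_n)\in\{0,1\}^n$, $j=1,\dots,m$, under the promise that $x_i^1\cdots x_i^m\in A$ for every $i$, where $A$ is any subset of $\{v\in O^m: v=u \text{ or the Hamming weight of } v\oplus u \text{ is an odd multiple of } 2\}$. Let $f_u(X_1,\dots,X_m)=\bigoplus_{i=1}^n t_u(x_i^1\cdots x_i^m)$ with $t_u(w)=1$ if $w=u$ and $0$ otherwise. Suppose the parties share $n$ copies of the GHZ state $|\psi_m^{GHZ}\rangle=(|0^m\rangle+|1^m\rangle)/\sqrt2$, the $j$-th qubit of each copy held by party $j$. Then there is a protocol in which, for each $i$, party $j$ applies to its qubit of the $i$-th copy the operator $H$ if $x_i^j=u_j$ and the operator $HR$ (first $R$, then $H$) if $x_i^j\ne u_j$, measures in the computational basis, performs local classical computation, and parties $2,\dots,m$ each send one classical bit to Alice ($m-1$ classical bits in total), after which Alice outputs $f_u(X_1,\dots,X_m)$ correctly for every input satisfying the promise.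
   Context: $H$ is the Hadamard gate $H|0\rangle=(|0\rangle+|1\rangle)/\sqrt2$, $H|1\rangle=(|0\rangle-|1\rangle)/\sqrt2$, and $R$ is the phase gate $R|0\rangle=|0\rangle$, $R|1\rangle=e^{i\pi/2}|1\rangle$. Communication consists only of classical bits sent to Alice; no quantum communication is allowed. *)

theory Defs
  imports Complex_Main
begin

text \<open>Parties are indexed 0,...,m-1; party 0 is Alice.
  A one-qubit operator is a 2x2 complex matrix given as a function
  (row index, column index), with the computational basis |0>, |1> indexed by False, True.\<close>

type_synonym qop = "bool \<Rightarrow> bool \<Rightarrow> complex"

definition hadamard :: qop where
  "hadamard b z = (if b \<and> z then - 1 else 1) / complex_of_real (sqrt 2)"

definition phaseR :: qop where
  "phaseR b z = (if b \<noteq> z then 0 else if b then \<i> else 1)"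

definition qop_mult :: "qop \<Rightarrow> qop \<Rightarrow> qop" where
  "qop_mult P Q b z = (\<Sum>k\<in>(UNIV::bool set). P b k * Q k z)"

definition HR :: qop where
  "HR = qop_mult hadamard phaseR"

definition ghz :: "nat \<Rightarrow> bool list \<Rightarrow> complex" where
  "ghz m z = (if (\<forall>j<m. \<not> z ! j) \<or> (\<forall>j<m. z ! j)
              then 1 / complex_of_real (sqrt 2) else 0)"

text \<open>Amplitude <b| (U_0 \<otimes> ... \<otimes> U_{m-1}) |GHZ_m> of outcome string b (length m).\<close>
definition ghz_amp :: "nat \<Rightarrow> (nat \<Rightarrow> qop) \<Rightarrow> bool list \<Rightarrow> complex" where
  "ghz_amp m U b = (\<Sum>z\<in>{z. length z = m}. (\<Prod>j<m. U j (b ! j) (z ! j)) * ghz m z)"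

definition party_op :: "bool list \<Rightarrow> nat \<Rightarrow> bool \<Rightarrow> qop" where
  "party_op u j x = (if x = u ! j then hadamard else HR)"

definition column :: "nat \<Rightarrow> (nat \<Rightarrow> bool list) \<Rightarrow> nat \<Rightarrow> bool list" where
  "column m X i = map (\<lambda>j. X j ! i) [0..<m]"

text \<open>Probability of the joint computational-basis outcome B (B j = outcomes of party j
  on its n qubits) on the n GHZ copies after the local operators. The n-copy state and the
  applied operator are tensor products over the copies, so the amplitude is the product of
  per-copy amplitudes.\<close>
definition outcome_prob :: "nat \<Rightarrow> nat \<Rightarrow> bool list \<Rightarrow> (nat \<Rightarrow> bool list) \<Rightarrow> (nat \<Rightarrow> bool list) \<Rightarrow> real" where
  "outcome_prob m n u X B =
     (\<Prod>i<n. (cmod (ghz_amp m (\<lambda>j. party_op u j (X j ! i)) (column m B i)))\<^sup>2)"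

definition odd_parity :: "bool list \<Rightarrow> bool" where
  "odd_parity v = odd (card {j. j < length v \<and> v ! j})"

definition hamming_xor :: "bool list \<Rightarrow> bool list \<Rightarrow> nat" where
  "hamming_xor v w = card {j. j < length v \<and> v ! j \<noteq> w ! j}"

definition t_fun :: "bool list \<Rightarrow> bool list \<Rightarrow> bool" where
  "t_fun u w = (w = u)"

fun f_u :: "nat \<Rightarrow> bool list \<Rightarrow> (nat \<Rightarrow> bool list) \<Rightarrow> nat \<Rightarrow> bool" where
  "f_u m u X 0 = False"
| "f_u m u X (Suc i) = (f_u m u X i \<noteq> t_fun u (column m X i))"

end

theory Submission
  imports Defs
begin

lemma H_F: "hadamard b False = 1 / complex_of_real (sqrt 2)"
  by (simp add: hadamard_def)
lemma H_T: "hadamard b True = (if b then -1 else 1) / complex_of_real (sqrt 2)"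
  by (simp add: hadamard_def)
lemma HR_eq: "HR b z = hadamard b z * (if z then \<i> else 1)"
  unfolding HR_def qop_mult_def by (cases z) (simp_all add: UNIV_bool phaseR_def)

lemma party_F: "party_op u j x b False = 1 / complex_of_real (sqrt 2)"
  by (simp add: party_op_def HR_eq H_F)
lemma party_T: "party_op u j x b True =
   ((if b then -1 else 1) * (if x \<noteq> u ! j then \<i> else 1)) / complex_of_real (sqrt 2)"
  by (simp add: party_op_def HR_eq H_T)

lemma prod_if_const: "finite K \<Longrightarrow> (\<Prod>j\<in>K. if P j then c else 1) = c ^ card {j\<in>K. P j}"
  by (simp add: prod.If_cases Int_def conj_commute)

lemma ghz_amp_two:
  assumes "m \<ge> 1" "length b = m"
  shows "ghz_amp m U b = (\<Prod>j<m. U j (b!j) False) / complex_of_real (sqrt 2)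
                        + (\<Prod>j<m. U j (b!j) True) / complex_of_real (sqrt 2)"
proof -
  let ?S = "{z::bool list. length z = m}"
  let ?T = "{replicate m False, replicate m True}"
  let ?f = "\<lambda>z. (\<Prod>j<m. U j (b ! j) (z ! j)) * ghz m z"
  have fin: "finite ?S" using finite_lists_length_eq[of "UNIV::bool set" m] by simp
  have ne: "replicate m False \<noteq> replicate m True" using assms(1)
    by (cases m) auto
  have "sum ?f ?S = sum ?f ?T"
  proof (rule sum.mono_neutral_right[OF fin])
    show "?T \<subseteq> ?S" by auto
    show "\<forall>z\<in>?S - ?T. ?f z = 0"
    proof
      fix z assume z: "z \<in> ?S - ?T"
      have "\<not> ((\<forall>j<m. \<not> z ! j) \<or> (\<forall>j<m. z ! j))"
      proof
        assume "(\<forall>j<m. \<not> z ! j) \<or> (\<forall>j<m. z ! j)"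
        then have "z = replicate m False \<or> z = replicate m True"
          using z by (auto simp: list_eq_iff_nth_eq)
        then show False using z by auto
      qed
      then show "?f z = 0" unfolding ghz_def by auto
    qed
  qed
  also have "\<dots> = ?f (replicate m False) + ?f (replicate m True)"
    using ne by simp
  also have "\<dots> = (\<Prod>j<m. U j (b!j) False) / complex_of_real (sqrt 2)
                        + (\<Prod>j<m. U j (b!j) True) / complex_of_real (sqrt 2)"
    by (simp add: ghz_def)
  finally show ?thesis unfolding ghz_amp_def .
qed

lemma amp_parity:
  assumes "m \<ge> 1" "length b = m"
    and nz: "ghz_amp m (\<lambda>j. party_op u j (x!j)) b \<noteq> 0"
  shows "1 + (-1) ^ card {j\<in>{..<m}. b!j} * \<i> ^ card {j\<in>{..<m}. x!j \<noteq> u!j} \<noteq> (0::complex)"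
proof
  let ?r = "complex_of_real (sqrt 2)"
  let ?s = "(-1) ^ card {j\<in>{..<m}. b!j} :: complex"
  let ?t = "\<i> ^ card {j\<in>{..<m}. x!j \<noteq> u!j}"
  assume h: "1 + ?s * ?t = 0"
  have pF: "(\<Prod>j<m. party_op u j (x!j) (b!j) False) = 1 / ?r ^ m"
    by (simp add: party_F power_one_over)
  have "(\<Prod>j<m. party_op u j (x!j) (b!j) True)
     = (\<Prod>j<m. (if b!j then -1 else 1) * (if x!j \<noteq> u!j then \<i> else 1)) / ?r ^ m"
    by (simp add: party_T prod_dividef)
  also have "\<dots> = ?s * ?t / ?r ^ m"
    by (simp only: prod.distrib prod_if_const finite_lessThan)
  finally have pT: "(\<Prod>j<m. party_op u j (x!j) (b!j) True) = ?s * ?t / ?r ^ m" .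
  have "ghz_amp m (\<lambda>j. party_op u j (x!j)) b = (1 + ?s * ?t) / ?r ^ m / ?r"
    by (simp add: ghz_amp_two[OF assms(1,2)] pF pT add_divide_distrib)
  with h nz show False by simp
qed

lemma col_iff:
  assumes "m \<ge> 1" "length b = m" "length v = m"
    and pr: "v = u \<or> (\<exists>k. hamming_xor v u = 2 * (2 * k + 1))"
    and nz: "ghz_amp m (\<lambda>j. party_op u j (v!j)) b \<noteq> 0"
  shows "(v = u) \<longleftrightarrow> even (card {j\<in>{..<m}. b!j})"
proof -
  have A: "1 + (-1) ^ card {j\<in>{..<m}. b!j} * \<i> ^ card {j\<in>{..<m}. v!j \<noteq> u!j} \<noteq> (0::complex)"
    using amp_parity[OF assms(1,2) nz] .
  show ?thesis
  proof (cases "v = u")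
    case True
    then have c0: "card {j\<in>{..<m}. v!j \<noteq> u!j} = 0" by simp
    from A have B: "1 + (-1) ^ card {j\<in>{..<m}. b!j} \<noteq> (0::complex)"
      unfolding c0 by simp
    have "even (card {j\<in>{..<m}. b!j})"
    proof (rule ccontr)
      assume "\<not> even (card {j\<in>{..<m}. b!j})"
      then have "(-1::complex) ^ card {j\<in>{..<m}. b!j} = -1" by (simp add: power_minus1_odd)
      with B show False by simp
    qed
    with True show ?thesis by simp
  next
    case False
    with pr obtain k where k: "hamming_xor v u = 2 * (2 * k + 1)" by auto
    have "card {j\<in>{..<m}. v!j \<noteq> u!j} = hamming_xor v u"
      unfolding hamming_xor_def using assms(3) by (metis lessThan_iff)
    then have "\<i> ^ card {j\<in>{..<m}. v!j \<noteq> u!j} = (-1::complex)"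
      using k by (simp add: power_mult)
    with A False show ?thesis by (auto simp: power_minus1_odd)
  qed
qed

lemma L1: "finite K \<Longrightarrow> odd (\<Sum>j\<in>K. of_bool (odd (S j)) :: nat) = odd (\<Sum>j\<in>K. S j :: nat)"
  by (induction K rule: finite_induct) (auto simp del: sum_of_bool_eq)

lemma L2: "finite K \<Longrightarrow> odd (\<Sum>j\<in>K. of_bool (even (S j)) :: nat) = odd (card K + (\<Sum>j\<in>K. S j :: nat))"
  by (induction K rule: finite_induct) (auto simp del: sum_of_bool_eq)

lemma fu_sum: "f_u m u X n = odd (\<Sum>i<n. of_bool (column m X i = u) :: nat)"
  by (induction n) (auto simp: t_fun_def simp del: sum_of_bool_eq)

theorem theorem5:
  fixes m n :: nat and u :: "bool list" and A :: "bool list set"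
  assumes "m \<ge> 3" and "length u = m" and "odd_parity u" and "n \<ge> 1"
    and "A \<subseteq> {v. length v = m \<and> odd_parity v \<and>
                    (v = u \<or> (\<exists>k. hamming_xor v u = 2 * (2 * k + 1)))}"
  shows "\<exists>(send :: nat \<Rightarrow> bool list \<Rightarrow> bool list \<Rightarrow> bool)
            (out :: bool list \<Rightarrow> bool list \<Rightarrow> bool list \<Rightarrow> bool).
    \<forall>X B. (\<forall>j<m. length (X j) = n) \<longrightarrow> (\<forall>i<n. column m X i \<in> A) \<longrightarrow>
          (\<forall>j<m. length (B j) = n) \<longrightarrow> outcome_prob m n u X B > 0 \<longrightarrow>
          out (X 0) (B 0) (map (\<lambda>j. send j (X j) (B j)) [1..<m]) = f_u m u X n"
proof -
  have m1: "m \<ge> 1" using assms(1) by simp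
  define send :: "nat \<Rightarrow> bool list \<Rightarrow> bool list \<Rightarrow> bool" where
    "send = (\<lambda>j xj bj. odd (\<Sum>i<n. of_bool (bj ! i) :: nat))"
  define out :: "bool list \<Rightarrow> bool list \<Rightarrow> bool list \<Rightarrow> bool" where
    "out = (\<lambda>x0 b0 ss. odd (n + (\<Sum>i<n. of_bool (b0 ! i) :: nat) + sum_list (map of_bool ss)))"
  have "\<forall>X B. (\<forall>j<m. length (X j) = n) \<longrightarrow> (\<forall>i<n. column m X i \<in> A) \<longrightarrow>
          (\<forall>j<m. length (B j) = n) \<longrightarrow> outcome_prob m n u X B > 0 \<longrightarrow>
          out (X 0) (B 0) (map (\<lambda>j. send j (X j) (B j)) [1..<m]) = f_u m u X n"
  proof (intro allI impI)
    fix X B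
    assume lX: "\<forall>j<m. length (X j) = n" and inA: "\<forall>i<n. column m X i \<in> A"
      and lB: "\<forall>j<m. length (B j) = n" and pos: "outcome_prob m n u X B > 0"
    define S where "S j = (\<Sum>i<n. of_bool (B j ! i) :: nat)" for j
    define c where "c i = (\<Sum>j<m. of_bool (B j ! i) :: nat)" for i
    have nz: "ghz_amp m (\<lambda>j. party_op u j (X j ! i)) (column m B i) \<noteq> 0" if "i < n" for i
    proof
      assume "ghz_amp m (\<lambda>j. party_op u j (X j ! i)) (column m B i) = 0"
      then have "outcome_prob m n u X B = 0"
        unfolding outcome_prob_def using that by (intro prod_zero) auto
      with pos show False by simp
    qed
    have ci: "(column m X i = u) \<longleftrightarrow> even (c i)" if "i < n" for i
    proof -
      have v: "column m X i \<in> A" using inA that by auto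
      have "ghz_amp m (\<lambda>j. party_op u j (column m X i ! j)) (column m B i)
          = ghz_amp m (\<lambda>j. party_op u j (X j ! i)) (column m B i)"
        unfolding ghz_amp_def by (intro sum.cong refl arg_cong2[where f="(*)"] prod.cong) (auto simp: column_def)
      then have nz': "ghz_amp m (\<lambda>j. party_op u j (column m X i ! j)) (column m B i) \<noteq> 0"
        using nz that by simp
      have "(column m X i = u) \<longleftrightarrow> even (card {j\<in>{..<m}. column m B i ! j})"
        by (rule col_iff[OF m1 _ _ _ nz']) (use v assms(5) in \<open>auto simp: column_def\<close>)
      also have "{j\<in>{..<m}. column m B i ! j} = {j\<in>{..<m}. B j ! i}"
        by (auto simp: column_def)
      also have "card \<dots> = c i" unfolding c_def by (simp add: Int_def conj_commute)
      finally show ?thesis .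
    qed
    have "f_u m u X n = odd (\<Sum>i<n. of_bool (even (c i)) :: nat)"
      unfolding fu_sum by (intro arg_cong[where f=odd] sum.cong refl) (simp add: ci del: sum_of_bool_eq)
    also have "\<dots> = odd (n + (\<Sum>i<n. c i))" using L2[of "{..<n}" c] by simp
    also have "(\<Sum>i<n. c i) = (\<Sum>j<m. S j)"
      unfolding c_def S_def by (rule sum.swap)
    also have "(\<Sum>j<m. S j) = S 0 + (\<Sum>j\<in>{1..<m}. S j)"
      using m1 by (simp add: lessThan_atLeast0 sum.atLeast_Suc_lessThan)
    finally have F: "f_u m u X n = odd (n + S 0 + (\<Sum>j\<in>{1..<m}. S j))" by (simp add: add.assoc)
    have "sum_list (map of_bool (map (\<lambda>j. send j (X j) (B j)) [1..<m])) 
          = (\<Sum>j\<in>set [1..<m]. of_bool (odd (S j)) :: nat)"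
      by (simp only: map_map o_def sum_set_upt_conv_sum_list_nat) (simp add: send_def S_def del: sum_of_bool_eq)
    then have "out (X 0) (B 0) (map (\<lambda>j. send j (X j) (B j)) [1..<m])
        = odd (n + S 0 + (\<Sum>j\<in>{1..<m}. of_bool (odd (S j)) :: nat))"
      by (simp add: out_def S_def del: sum_of_bool_eq)
    also have "\<dots> = odd (n + S 0 + (\<Sum>j\<in>{1..<m}. S j))"
      using L1[of "{1..<m}" S] by simp
    finally show "out (X 0) (B 0) (map (\<lambda>j. send j (X j) (B j)) [1..<m]) = f_u m u X n"
      using F by simp
  qed
  then show ?thesis by blast
qed

end
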